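(* For every integer $n\ge1$, $\zeta(-n,-n-1|1)=\zeta(-n-1,-n|1)$.
   Context: Normalized multiple Bernoulli polynomials: for integers $k\ge0$, $\zeta(-k|z)=-\frac{B_{k+1}(z)}{k+1}$ ($B_n(z)$ the Bernoulli polynomials, $B_n=B_n(0)$), and for $k_1,k_2\ge0$, $\zeta(-k_1,-k_2|z)=-\frac{1}{k_2+1}\zeta(-k_1-k_2-1|z)-\frac12\zeta(-k_1-k_2|z)+\sum_{q=1}^{k_2}(-k_2)_q\frac{B_{q+1}}{(q+1)!}\zeta(-k_1-k_2+q|z)$, with $(a)_q=a(a+1)\cdots(a+q-1)$. *)

theory Defs
  imports Complex_Main
begin

text \<open>Bernoulli numbers, convention B_1 = -1/2 (so that B_n = B_n(0)),
  via the recurrence sum_{k<=n} C(n+1,k) B_k = 0 for n >= 1, B_0 = 1.\<close>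
fun bernoulli :: "nat \<Rightarrow> real" where
  "bernoulli n = (if n = 0 then 1 else
     - (\<Sum>k<n. real (Suc n choose k) * bernoulli k) / real (Suc n))"

declare bernoulli.simps [simp del]

definition bernpoly :: "nat \<Rightarrow> real \<Rightarrow> real" where
  "bernpoly n z = (\<Sum>k\<le>n. real (n choose k) * bernoulli k * z ^ (n - k))"

definition zeta1 :: "nat \<Rightarrow> real \<Rightarrow> real" where
  "zeta1 k z = - bernpoly (k + 1) z / real (k + 1)"

text \<open>zeta(-k1,-k2 | z).\<close>
definition zeta2 :: "nat \<Rightarrow> nat \<Rightarrow> real \<Rightarrow> real" where
  "zeta2 k1 k2 z =
     - (1 / real (k2 + 1)) * zeta1 (k1 + k2 + 1) z
     - (1 / 2) * zeta1 (k1 + k2) z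
     + (\<Sum>q=1..k2. pochhammer (- real k2) q * (bernoulli (q + 1) / fact (q + 1))
                     * zeta1 (k1 + k2 - q) z)"

end

theory Submission
  imports Defs "HOL-Computational_Algebra.Formal_Power_Series"
begin

lemma bern_rec:
  assumes "m \<ge> 1"
  shows "(\<Sum>k\<le>m. real (Suc m choose k) * bernoulli k) = 0"
proof -
  have b: "bernoulli m = - (\<Sum>k<m. real (Suc m choose k) * bernoulli k) / real (Suc m)"
    using assms bernoulli.simps[of m] by simp
  have "(\<Sum>k\<le>m. real (Suc m choose k) * bernoulli k)
        = (\<Sum>k<m. real (Suc m choose k) * bernoulli k) + real (Suc m) * bernoulli m"
    by (simp add: lessThan_Suc_atMost[symmetric])
  also have "\<dots> = 0" unfolding b by (simp add: field_simps)
  finally show ?thesis .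
qed

definition bfps :: "real fps" where "bfps = Abs_fps (\<lambda>n. bernoulli n / fact n)"

lemma key1: "(fps_exp 1 - 1) * bfps = fps_X"
proof (rule fps_ext)
  fix n
  show "fps_nth ((fps_exp 1 - 1) * bfps) n = fps_nth fps_X n"
  proof (cases n)
    case 0 then show ?thesis by (simp add: fps_mult_nth)
  next
    case (Suc m)
    have "fps_nth ((fps_exp 1 - 1) * bfps) n = (\<Sum>i=0..n. fps_nth (fps_exp 1 - 1) i * fps_nth bfps (n - i))"
      by (simp add: fps_mult_nth)
    also have "\<dots> = (\<Sum>i=0..n. (if i = 0 then 0 else 1 / fact i) * (bernoulli (n - i) / fact (n - i)))"
      by (intro sum.cong) (auto simp: bfps_def)
    also have "\<dots> = (\<Sum>i=0..n. (if i = 0 then 0 else 1 / fact i * (bernoulli (n - i) / fact (n - i))))"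
      by (intro sum.cong) auto
    also have "\<dots> = (\<Sum>i\<in>{1..n}. 1 / fact i * (bernoulli (n - i) / fact (n - i)))"
      by (subst sum.mono_neutral_cong_right[of "{0..n}" "{1..n}"]) auto
    also have "\<dots> = (\<Sum>k\<le>m. 1 / fact (n - k) * (bernoulli k / fact k))"
    proof -
      have "(\<Sum>i\<in>{1..n}. 1 / fact i * (bernoulli (n - i) / fact (n - i)))
          = (\<Sum>k\<in>(\<lambda>i. n - i) ` {1..n}. 1 / fact (n - k) * (bernoulli k / fact k))"
        by (subst sum.reindex) (auto simp: inj_on_def intro!: sum.cong)
      also have "(\<lambda>i. n - i) ` {1..n} = {..m}"
        proof (rule set_eqI, rule iffI)
        fix x assume "x \<in> {..m}"
        then have "x = n - (n - x)" "n - x \<in> {1..n}" using Suc by auto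
        then show "x \<in> (\<lambda>i. n - i) ` {1..n}" by blast
      qed (use Suc in auto)
      finally show ?thesis .
    qed
    also have "\<dots> = (\<Sum>k\<le>m. real (n choose k) * bernoulli k) / fact n"
      unfolding sum_divide_distrib
    proof (intro sum.cong refl)
      fix k assume "k \<in> {..m}"
      hence "k \<le> n" using Suc by auto
      then show "1 / fact (n - k) * (bernoulli k / fact k) = real (n choose k) * bernoulli k / fact n"
        by (simp add: binomial_fact field_simps)
    qed
    also have "\<dots> = fps_nth fps_X n"
    proof (cases "m = 0")
      case True then show ?thesis using Suc by (simp add: bernoulli.simps)
    next
      case False then show ?thesis using Suc bern_rec[of m] by simp
    qed
    finally show ?thesis .
  qed
qed

lemma key2: "Abs_fps (\<lambda>n. (-1)^n * fps_nth bfps n) = bfps + fps_X"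
proof -
  let ?E = "fps_exp (1::real)"
  let ?b' = "bfps oo (- fps_X)"
  have c0: "fps_nth (- fps_X :: real fps) 0 = 0" by simp
  have "((?E - 1) * bfps) oo (- fps_X) = fps_X oo (- fps_X)" by (simp add: key1)
  hence "(fps_exp (-1) - 1) * ?b' = - fps_X"
    by (simp add: fps_compose_mult_distrib[OF c0] fps_compose_sub_distrib)
  hence "?E * ((fps_exp (-1) - 1) * ?b') = ?E * (- fps_X)" by simp
  moreover have "?E * fps_exp (-1) = 1"
    using fps_exp_add_mult[of 1 "-1::real"] by simp
  moreover have "?E * ((fps_exp (-1) - 1) * ?b') = (?E * fps_exp (-1) - ?E) * ?b'"
    by (simp add: algebra_simps)
  ultimately have "(1 - ?E) * ?b' = - (?E * fps_X)"
    by simp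
  hence A: "(?E - 1) * ?b' = ?E * fps_X" by (simp add: algebra_simps)
  have B: "(?E - 1) * (bfps + fps_X) = ?E * fps_X"
    using key1 by (simp add: algebra_simps)
  have ne: "?E - 1 \<noteq> 0"
  proof
    assume "?E - 1 = 0"
    hence "fps_nth (?E - 1) 1 = 0" by simp
    thus False by simp
  qed
  from A B have "(?E - 1) * ?b' = (?E - 1) * (bfps + fps_X)" by simp
  hence "?b' = bfps + fps_X" using mult_left_cancel[OF ne] by blast
  thus ?thesis by (simp add: fps_compose_uminus')
qed

lemma bern_odd:
  assumes "odd m" "m \<noteq> 1"
  shows "bernoulli m = 0"
proof -
  have "fps_nth (Abs_fps (\<lambda>n. (-1)^n * fps_nth bfps n)) m = fps_nth (bfps + fps_X) m"
    using key2 by simp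
  hence "- (bernoulli m / fact m) = bernoulli m / fact m"
    using assms by (simp add: bfps_def)
  thus ?thesis by simp
qed

lemma bernpoly_one:
  assumes "m \<ge> 2"
  shows "bernpoly m 1 = bernoulli m"
proof -
  obtain j where m: "m = Suc j" and j: "j \<ge> 1" using assms by (cases m) auto
  have "bernpoly m 1 = (\<Sum>k\<le>m. real (m choose k) * bernoulli k)"
    by (simp add: bernpoly_def)
  also have "\<dots> = (\<Sum>k\<le>j. real (Suc j choose k) * bernoulli k) + bernoulli m"
    using m by simp
  also have "\<dots> = bernoulli m" using bern_rec[OF j] by simp
  finally show ?thesis .
qed

lemma zeta1_one: "k \<ge> 1 \<Longrightarrow> zeta1 k 1 = - bernoulli (k + 1) / real (k + 1)"
  by (simp add: zeta1_def bernpoly_one)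

lemma sum_vanish:
  assumes "n \<ge> 1" "k2 \<le> n + 1"
  shows "(\<Sum>q=1..k2. pochhammer (- real k2) q * (bernoulli (q + 1) / fact (q + 1))
                     * zeta1 (n+n+1 - q) 1) = 0"
proof (intro sum.neutral ballI)
  fix q assume q: "q \<in> {1..k2}"
  show "pochhammer (- real k2) q * (bernoulli (q + 1) / fact (q + 1)) * zeta1 (n+n+1 - q) 1 = 0"
  proof (cases "even q")
    case True
    then have "bernoulli (q+1) = 0" using q by (intro bern_odd) auto
    then show ?thesis by simp
  next
    case False
    have "n+n+1-q \<ge> 1" using q assms by auto
    hence "zeta1 (n+n+1 - q) 1 = - bernoulli (n+n+1-q+1) / real (n+n+1-q+1)"
      by (rule zeta1_one)
    moreover have "bernoulli (n+n+1-q+1) = 0"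
      using q assms False by (intro bern_odd) auto
    ultimately show ?thesis by simp
  qed
qed

theorem propositionB:
  fixes n :: nat
  assumes "n \<ge> 1"
  shows "zeta2 n (n + 1) 1 = zeta2 (n + 1) n 1"
proof -
  have z: "zeta1 (n+n+2) 1 = 0"
    using assms by (simp add: zeta1_one bern_odd)
  have s1: "(\<Sum>q=1..n+1. pochhammer (- real (n+1)) q * (bernoulli (q + 1) / fact (q + 1))
                     * zeta1 (n + (n+1) - q) 1) = 0"
    using sum_vanish[OF assms, of "n+1"] by (simp add: algebra_simps)
  have s2: "(\<Sum>q=1..n. pochhammer (- real n) q * (bernoulli (q + 1) / fact (q + 1))
                     * zeta1 (n + 1 + n - q) 1) = 0"
    using sum_vanish[OF assms, of "n"] by (simp add: algebra_simps)
  have e1: "n + (n+1) + 1 = n+n+2" "n+1+n+1 = n+n+2" "n + (n+1) = n+1+n" by auto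
  show ?thesis unfolding zeta2_def using s1 s2 z e1 by simp
qed

end
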